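(* For every $\rho\in\mathbb N$ there exist $\mu,n_0\in\mathbb N$ such that for every upwards closed quasi-bush $B=(T,D,\lambda)$ with no coat hangers and with $n\ge n_0$ leaves, if $\mathrm{wcol}_\mu(B)\le n^{1/\mu}$ and for every $w\in V(T)$ either $|\mathrm{IN}(w,B)|\le n^{1/\mu}$ or $|\mathrm{OUT}(w,B)|\le n^{1/\mu}$, then $\mathrm{wcol}_\rho(G(B))\le n^{1/\rho}$.
   Context: A quasi-bush $B=(T,D,\lambda)$: a rooted tree $T$, a set $D$ of pointers from leaves of $T$ to nodes of $T$ (every leaf points to the root), and $\lambda\colon D\to\{0,1\}$. $v\le_T w$ means $v$ is an ancestor of $w$ (including $v=w$); $T(a)$ is the subtree of descendants of $a$. $G(B)$ is the directed graph on the leaves of $T$ where, for distinct leaves $u,v$ and $w$ the lowest ancestor of $v$ with $(u,w)\in D$, $(u,v)$ is an arc iff $\lambda((u,w))=1$; $w$ is the connection point of $(u,v)$. Quasi-bushes are assumed to represent undirected graphs ($G(B)$ symmetric), and $G(B)$ is identified with the corresponding undirected graph. $B$ is upwards closed if $(u,w)\in D$ and $w'\le_T w$ imply $(u,w')\in D$. A coat hanger is a subtree $T(a)$ such that $a$ is neither the root nor a leaf, and some leaf $v$ has a pointer labeled $1$ to the parent of $a$ but no pointer to any node of $T(a)$. $\mathrm{IN}(w,B)$ (resp. $\mathrm{OUT}(w,B)$) is the set of all $u$ (resp. $v$) such that $w$ is the connection point of some arc $(u,v)$ of $G(B)$. $\mathrm{wcol}_r(H)$ is the minimum over linear orders $\prec$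 of the maximum over $v$ of the number of $u$ such that some path of length at most $r$ from $v$ to $u$ has $u$ as its $\prec$-minimum; $\mathrm{wcol}_\mu(B)$ refers to the Gaifman graph of $B$ (vertex set $V(T)$, edges the tree edges and pointers). *)

theory Defs
  imports Complex_Main
begin

definition rooted_tree :: "'a set \<Rightarrow> 'a \<Rightarrow> ('a \<Rightarrow> 'a) \<Rightarrow> bool" where
  "rooted_tree V r par \<longleftrightarrow> finite V \<and> r \<in> V \<and> par r = r \<and> (\<forall>v\<in>V. par v \<in> V)
     \<and> (\<forall>v\<in>V. \<exists>k. (par ^^ k) v = r)"

definition anc :: "'a set \<Rightarrow> ('a \<Rightarrow> 'a) \<Rightarrow> 'a \<Rightarrow> 'a \<Rightarrow> bool" where
  "anc V par v w \<longleftrightarrow> w \<in> V \<and> (\<exists>k. (par ^^ k) w = v)"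

definition is_leaf :: "'a set \<Rightarrow> ('a \<Rightarrow> 'a) \<Rightarrow> 'a \<Rightarrow> bool" where
  "is_leaf V par v \<longleftrightarrow> v \<in> V \<and> \<not> (\<exists>u\<in>V. u \<noteq> v \<and> par u = v)"

definition leaves :: "'a set \<Rightarrow> ('a \<Rightarrow> 'a) \<Rightarrow> 'a set" where
  "leaves V par = {v. is_leaf V par v}"

(* Quasi-bush (T, D, lambda); lambda((u,w)) = 1 is encoded as lam (u,w) = True *)
definition quasi_bush :: "'a set \<Rightarrow> 'a \<Rightarrow> ('a \<Rightarrow> 'a) \<Rightarrow> ('a \<times> 'a) set \<Rightarrow> bool" where
  "quasi_bush V r par D \<longleftrightarrow> rooted_tree V r par
     \<and> D \<subseteq> leaves V par \<times> V
     \<and> (\<forall>u\<in>leaves V par. (u, r) \<in> D)"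

definition conn_point :: "'a set \<Rightarrow> ('a \<Rightarrow> 'a) \<Rightarrow> ('a \<times> 'a) set \<Rightarrow> 'a \<Rightarrow> 'a \<Rightarrow> 'a" where
  "conn_point V par D u v = (THE w. anc V par w v \<and> (u, w) \<in> D
      \<and> (\<forall>w'. anc V par w' v \<and> (u, w') \<in> D \<longrightarrow> anc V par w' w))"

definition arc :: "'a set \<Rightarrow> ('a \<Rightarrow> 'a) \<Rightarrow> ('a \<times> 'a) set \<Rightarrow> ('a \<times> 'a \<Rightarrow> bool) \<Rightarrow> 'a \<Rightarrow> 'a \<Rightarrow> bool" where
  "arc V par D lam u v \<longleftrightarrow> u \<in> leaves V par \<and> v \<in> leaves V par \<and> u \<noteq> v
      \<and> lam (u, conn_point V par D u v)"

definition upwards_closed :: "'a set \<Rightarrow> ('a \<Rightarrow> 'a) \<Rightarrow> ('a \<times> 'a) set \<Rightarrow> bool" where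
  "upwards_closed V par D \<longleftrightarrow> (\<forall>u w w'. (u, w) \<in> D \<and> anc V par w' w \<longrightarrow> (u, w') \<in> D)"

definition coat_hanger :: "'a set \<Rightarrow> 'a \<Rightarrow> ('a \<Rightarrow> 'a) \<Rightarrow> ('a \<times> 'a) set \<Rightarrow> ('a \<times> 'a \<Rightarrow> bool) \<Rightarrow> 'a \<Rightarrow> bool" where
  "coat_hanger V r par D lam a \<longleftrightarrow> a \<in> V \<and> a \<noteq> r \<and> \<not> is_leaf V par a
     \<and> (\<exists>v. is_leaf V par v \<and> (v, par a) \<in> D \<and> lam (v, par a)
            \<and> (\<forall>x. anc V par a x \<longrightarrow> (v, x) \<notin> D))"

definition IN_set :: "'a set \<Rightarrow> ('a \<Rightarrow> 'a) \<Rightarrow> ('a \<times> 'a) set \<Rightarrow> ('a \<times> 'a \<Rightarrow> bool) \<Rightarrow> 'a \<Rightarrow> 'a set" where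
  "IN_set V par D lam w = {u. \<exists>v. arc V par D lam u v \<and> conn_point V par D u v = w}"

definition OUT_set :: "'a set \<Rightarrow> ('a \<Rightarrow> 'a) \<Rightarrow> ('a \<times> 'a) set \<Rightarrow> ('a \<times> 'a \<Rightarrow> bool) \<Rightarrow> 'a \<Rightarrow> 'a set" where
  "OUT_set V par D lam w = {v. \<exists>u. arc V par D lam u v \<and> conn_point V par D u v = w}"

(* Weak reachability: u is weakly r-reachable from v w.r.t. the linear order given by
   the injective ranking f, if some walk of length \<le> r (at most r edges) from v to u
   has u as its f-minimum. *)
definition wreach :: "nat \<Rightarrow> 'a set \<Rightarrow> ('a \<Rightarrow> 'a \<Rightarrow> bool) \<Rightarrow> ('a \<Rightarrow> nat) \<Rightarrow> 'a \<Rightarrow> 'a set" where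
  "wreach r V E f v = {u \<in> V. \<exists>p. p \<noteq> [] \<and> hd p = v \<and> last p = u \<and> length p \<le> r + 1
      \<and> set p \<subseteq> V \<and> (\<forall>i. i + 1 < length p \<longrightarrow> E (p ! i) (p ! (i + 1)))
      \<and> (\<forall>x\<in>set p. f u \<le> f x)}"

definition wcol :: "nat \<Rightarrow> 'a set \<Rightarrow> ('a \<Rightarrow> 'a \<Rightarrow> bool) \<Rightarrow> nat" where
  "wcol r V E = (LEAST k. \<exists>f :: 'a \<Rightarrow> nat. inj_on f V \<and> (\<forall>v\<in>V. card (wreach r V E f v) \<le> k))"

definition gaifman_edge :: "'a \<Rightarrow> ('a \<Rightarrow> 'a) \<Rightarrow> ('a \<times> 'a) set \<Rightarrow> 'a \<Rightarrow> 'a \<Rightarrow> bool" where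
  "gaifman_edge r par D x y \<longleftrightarrow> (x \<noteq> r \<and> y = par x) \<or> (y \<noteq> r \<and> x = par y)
      \<or> (x, y) \<in> D \<or> (y, x) \<in> D"

end

theory Submission
  imports Defs
begin

lemma par_pow_in: "rooted_tree V r par \<Longrightarrow> v \<in> V \<Longrightarrow> (par ^^ k) v \<in> V"
  by (induction k) (auto simp: rooted_tree_def)

lemma par_pow_r: "rooted_tree V r par \<Longrightarrow> (par ^^ k) r = r"
  by (induction k) (auto simp: rooted_tree_def)

lemma par_pow_add: "(par ^^ (i + j)) v = (par ^^ i) ((par ^^ j) v)"
  by (simp add: funpow_add)

lemma par_pow_cycle:
  assumes "(par ^^ c) b = b"
  shows "(par ^^ (c * m)) b = b"
proof (induction m)
  case 0 then show ?case by simp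
next
  case (Suc m)
  have "(par ^^ (c * Suc m)) b = (par ^^ c) ((par ^^ (c * m)) b)"
    by (metis mult_Suc_right par_pow_add)
  then show ?case using Suc assms by simp
qed

lemma anc_antisym:
  assumes T: "rooted_tree V r par" and ab: "anc V par a b" and ba: "anc V par b a"
  shows "a = b"
proof -
  obtain i where i: "(par ^^ i) b = a" and bV: "b \<in> V" using ab by (auto simp: anc_def)
  obtain j where j: "(par ^^ j) a = b" and aV: "a \<in> V" using ba by (auto simp: anc_def)
  show ?thesis
  proof (cases "i = 0")
    case True then show ?thesis using i by simp
  next
    case False
    have cyc: "(par ^^ (j + i)) b = b" using i j by (simp add: par_pow_add)
    obtain t where t: "(par ^^ t) b = r" using T bV by (auto simp: rooted_tree_def)
    have ge: "(j + i) * t \<ge> t" using False by simp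
    have "(par ^^ ((j + i) * t)) b = b" using par_pow_cycle[OF cyc] .
    moreover have "(par ^^ ((j + i) * t)) b = (par ^^ ((j + i) * t - t)) ((par ^^ t) b)"
      using ge by (metis le_add_diff_inverse2 par_pow_add)
    ultimately have "b = r" using t par_pow_r[OF T] by simp
    then show ?thesis using i par_pow_r[OF T] by simp
  qed
qed

lemma cp_props:
  assumes QB: "quasi_bush V r par D" and u: "u \<in> leaves V par" and v: "v \<in> V"
  shows "anc V par (conn_point V par D u v) v \<and> (u, conn_point V par D u v) \<in> D
     \<and> (\<forall>w'. anc V par w' v \<and> (u, w') \<in> D \<longrightarrow> anc V par w' (conn_point V par D u v))"
proof -
  have T: "rooted_tree V r par" using QB by (simp add: quasi_bush_def)
  have ur: "(u, r) \<in> D" using QB u by (simp add: quasi_bush_def)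
  obtain t where t: "(par ^^ t) v = r" using T v by (auto simp: rooted_tree_def)
  define k0 where "k0 = (LEAST k. (u, (par ^^ k) v) \<in> D)"
  have k0: "(u, (par ^^ k0) v) \<in> D" unfolding k0_def
    by (rule LeastI[of _ t]) (use t ur in simp)
  have k0min: "\<And>j. (u, (par ^^ j) v) \<in> D \<Longrightarrow> k0 \<le> j" unfolding k0_def by (rule Least_le)
  define w0 where "w0 = (par ^^ k0) v"
  have w0V: "w0 \<in> V" unfolding w0_def using par_pow_in[OF T v] .
  let ?P = "\<lambda>w. anc V par w v \<and> (u, w) \<in> D \<and> (\<forall>w'. anc V par w' v \<and> (u, w') \<in> D \<longrightarrow> anc V par w' w)"
  have Pw0: "?P w0"
  proof (intro conjI allI impI)
    show "anc V par w0 v" using v by (auto simp: anc_def w0_def)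
    show "(u, w0) \<in> D" using k0 by (simp add: w0_def)
    fix w' assume "anc V par w' v \<and> (u, w') \<in> D"
    then obtain j where j: "(par ^^ j) v = w'" "(u, w') \<in> D" by (auto simp: anc_def)
    then have "k0 \<le> j" using k0min by auto
    then have "(par ^^ (j - k0)) w0 = w'" using j unfolding w0_def
      by (metis le_add_diff_inverse2 par_pow_add)
    then show "anc V par w' w0" using w0V by (auto simp: anc_def)
  qed
  have "(THE w. ?P w) = w0"
  proof (rule the_equality)
    show "?P w0" by (rule Pw0)
    fix x assume Px: "?P x"
    have "anc V par w0 x" using Px Pw0 by blast
    moreover have "anc V par x w0" using Px Pw0 by blast
    ultimately show "x = w0" using anc_antisym[OF T] by blast
  qed
  then show ?thesis using Pw0 unfolding conn_point_def by simp
qed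


lemma leaves_sub: "leaves V par \<subseteq> V"
  by (auto simp: leaves_def is_leaf_def)

lemma arc_cp:
  assumes QB: "quasi_bush V r par D" and UC: "upwards_closed V par D"
    and NC: "\<not> (\<exists>a. coat_hanger V r par D lam a)" and A: "arc V par D lam u v"
  shows "(u, conn_point V par D u v) \<in> D \<and> conn_point V par D u v \<in> V
     \<and> (conn_point V par D u v = v \<or> (v \<noteq> r \<and> conn_point V par D u v = par v))"
proof -
  define w where "w = conn_point V par D u v"
  have T: "rooted_tree V r par" using QB by (simp add: quasi_bush_def)
  have u: "u \<in> leaves V par" and v: "v \<in> leaves V par" and lam: "lam (u, w)"
    using A by (auto simp: arc_def w_def)
  have vV: "v \<in> V" using v by (simp add: leaves_def is_leaf_def)
  note cpp = cp_props[OF QB u vV, folded w_def]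
  have cp1: "anc V par w v" using cpp by (rule conjunct1)
  have cp2: "(u, w) \<in> D" using cpp by simp
  have cp3: "\<And>w'. anc V par w' v \<Longrightarrow> (u, w') \<in> D \<Longrightarrow> anc V par w' w" using cpp by simp
  note cp = cp1 cp2 cp3
  obtain k1 where "(par ^^ k1) v = w" using cp(1) by (auto simp: anc_def)
  define k where "k = (LEAST k. (par ^^ k) v = w)"
  have kw: "(par ^^ k) v = w" unfolding k_def by (rule LeastI) fact
  have kmin: "\<And>j. (par ^^ j) v = w \<Longrightarrow> k \<le> j" unfolding k_def by (rule Least_le)
  have wV: "w \<in> V" using kw par_pow_in[OF T vV] by blast
  have "w = v \<or> (v \<noteq> r \<and> w = par v)"
  proof (cases "w = v")
    case True then show ?thesis by simp
  next
    case False
    then have k1: "k \<ge> 1" using kw by (cases k) auto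
    show ?thesis
    proof (cases "k = 1")
      case True
      then have "w = par v" using kw by simp
      moreover have "v \<noteq> r" proof
        assume "v = r"
        then have "par v = v" using T by (simp add: rooted_tree_def)
        then show False using False \<open>w = par v\<close> by simp
      qed
      ultimately show ?thesis by simp
    next
      case False
      then have k2: "k \<ge> 2" using k1 by simp
      obtain m where km: "k = Suc (Suc m)" using k2 by (cases k; cases "k - 1") auto
      define a where "a = (par ^^ (Suc m)) v"
      define c where "c = (par ^^ m) v"
      have pa: "par a = w" using kw km unfolding a_def by simp
      have pc: "par c = a" unfolding a_def c_def by simp
      have aw: "a \<noteq> w"
      proof
        assume "a = w"
        then have "k \<le> Suc m" using kmin a_def by simp
        then show False using km by simp
      qed
      have aV: "a \<in> V" unfolding a_def using par_pow_in[OF T vV] .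
      have cV: "c \<in> V" unfolding c_def using par_pow_in[OF T vV] .
      have ar: "a \<noteq> r"
      proof
        assume "a = r"
        then have "par a = a" using T by (simp add: rooted_tree_def)
        then show False using aw pa by simp
      qed
      have ca: "c \<noteq> a" using pa pc aw by auto
      have nl: "\<not> is_leaf V par a" using cV ca pc by (auto simp: is_leaf_def)
      have ul: "is_leaf V par u" using u by (simp add: leaves_def)
      have "\<not> coat_hanger V r par D lam a" using NC by blast
      then have nch: "\<not> (\<exists>v'. is_leaf V par v' \<and> (v', par a) \<in> D \<and> lam (v', par a)
            \<and> (\<forall>x. anc V par a x \<longrightarrow> (v', x) \<notin> D))"
        using aV ar nl by (simp add: coat_hanger_def)
      have "\<not> (\<forall>x. anc V par a x \<longrightarrow> (u, x) \<notin> D)"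
      proof
        assume "\<forall>x. anc V par a x \<longrightarrow> (u, x) \<notin> D"
        then show False using nch ul cp(2) lam pa by auto
      qed
      then obtain x where x: "anc V par a x" "(u, x) \<in> D" by blast
      have uaD: "(u, a) \<in> D" using UC x unfolding upwards_closed_def by metis
      have "anc V par a v" using vV unfolding anc_def a_def by blast
      then have "anc V par a w" using cp(3) uaD by blast
      moreover have "anc V par w a" using aV pa unfolding anc_def by (intro conjI exI[of _ 1]) auto
      ultimately have "a = w" using anc_antisym[OF T] by blast
      then show ?thesis using aw by simp
    qed
  qed
  then show ?thesis using cp(2) wV unfolding w_def by simp
qed

lemma expand_walk:
  assumes "successively R q" "q \<noteq> []"
    and "\<And>x y. x \<in> set q \<Longrightarrow> y \<in> set q \<Longrightarrow> R x y \<Longrightarrow> \<exists>w. E x w \<and> (w = y \<or> E w y) \<and> G w"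
  shows "\<exists>p. p \<noteq> [] \<and> hd p = hd q \<and> last p = last q \<and> length p + 1 \<le> 2 * length q
     \<and> successively E p \<and> (\<forall>z\<in>set p. z \<in> set q \<or> G z)"
  using assms
proof (induction q rule: induct_list012)
  case 1 then show ?case by simp
next
  case (2 x) then show ?case by (intro exI[of _ "[x]"]) auto
next
  case (3 x y rest)
  have h1: "successively R (y # rest)" using "3.prems"(1) by simp
  have h3: "\<And>a b. a \<in> set (y # rest) \<Longrightarrow> b \<in> set (y # rest) \<Longrightarrow> R a b \<Longrightarrow> \<exists>w. E a w \<and> (w = b \<or> E w b) \<and> G w"
    using "3.prems"(3) by simp
  obtain p where p: "p \<noteq> []" "hd p = y" "last p = last (y # rest)" "length p + 1 \<le> 2 * length (y # rest)"
    "successively E p" "\<forall>z\<in>set p. z \<in> set (y # rest) \<or> G z"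
    using "3.IH"(2)[OF h1 _ h3] by auto
  have Rxy: "R x y" using "3.prems"(1) by simp
  obtain w where w: "E x w" "w = y \<or> E w y" "G w" using "3.prems"(3)[OF _ _ Rxy] by auto
  show ?case
  proof (cases "w = y")
    case True
    have "successively E (x # p)" using p(1,2,5) w(1) True by (cases p) auto
    moreover have "length (x # p) + 1 \<le> 2 * length (x # y # rest)" using p(4) by simp
    moreover have "\<forall>z\<in>set (x # p). z \<in> set (x # y # rest) \<or> G z" using p(6) by auto
    ultimately show ?thesis using p(1,3) by (intro exI[of _ "x # p"]) auto
  next
    case False
    then have Ewy: "E w y" using w(2) by simp
    have "successively E (x # w # p)" using p(1,2,5) w(1) Ewy by (cases p) auto
    moreover have "length (x # w # p) + 1 \<le> 2 * length (x # y # rest)" using p(4) by simp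
    moreover have "\<forall>z\<in>set (x # w # p). z \<in> set (x # y # rest) \<or> G z" using p(6) w(3) by auto
    ultimately show ?thesis using p(1,3) by (intro exI[of _ "x # w # p"]) auto
  qed
qed

lemma real_arith:
  fixes \<rho> n c sv :: nat
  assumes r: "\<rho> \<ge> 1" and n: "n \<ge> 4 ^ \<rho>"
    and c: "real c \<le> real n powr (1 / real (4 * \<rho>))"
    and sv: "real sv \<le> real n powr (1 / real (4 * \<rho>))"
  shows "real (c * (sv + 1)) \<le> real n powr (1 / real \<rho>)"
proof -
  define s where "s = real n powr (1 / real (4 * \<rho>))"
  define t where "t = real n powr (1 / real (2 * \<rho>))"
  have npos: "real n > 0" using n by (metis of_nat_0_less_iff order.strict_trans2 zero_less_numeral zero_less_power)
  have n1: "real n \<ge> 1" using npos by simp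
  have ss: "s * s = t" unfolding s_def t_def
    by (simp add: powr_add[symmetric])
  have tt: "t * t = real n powr (1 / real \<rho>)" unfolding t_def
    by (simp add: powr_add[symmetric])
  have s1: "s \<ge> 1" unfolding s_def using n1 by (simp add: ge_one_powr_ge_zero)
  have "real (4 ^ \<rho>) = 2 powr real (2 * \<rho>)"
  proof -
    have "(2::real) powr real (2 * \<rho>) = 2 ^ (2 * \<rho>)" by (rule powr_realpow) simp
    also have "\<dots> = 4 ^ \<rho>" by (simp add: power_mult)
    finally show ?thesis by simp
  qed
  then have "real (4 ^ \<rho>) powr (1 / real (2 * \<rho>)) = 2"
    using r by (simp add: powr_powr)
  moreover have "real (4 ^ \<rho>) powr (1 / real (2 * \<rho>)) \<le> t"
    unfolding t_def by (rule powr_mono2) (use n in auto)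
  ultimately have t2: "t \<ge> 2" by simp
  have "real (c * (sv + 1)) = real c * (real sv + 1)" by (simp add: algebra_simps)
  also have "\<dots> \<le> s * (s + 1)"
    using c sv s1 unfolding s_def by (intro mult_mono) auto
  also have "\<dots> = t + s" using ss by (simp add: algebra_simps)
  also have "\<dots> \<le> t + t" proof -
    have "s * 1 \<le> s * s" using s1 by (intro mult_left_mono) auto
    then show ?thesis using ss by simp
  qed
  also have "\<dots> \<le> t * t" proof -
    have "2 * t \<le> t * t" using t2 by (intro mult_right_mono) auto
    then show ?thesis by simp
  qed
  finally show ?thesis using tt by simp
qed
theorem lemma7p36:
  fixes \<rho> :: nat
  assumes "\<rho> \<ge> 1"
  shows "\<exists>\<mu> n\<^sub>0 :: nat. \<mu> \<ge> 1 \<and>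
    (\<forall>(V :: nat set) r par D lam.
       quasi_bush V r par D
       \<longrightarrow> (\<forall>u v. arc V par D lam u v \<longleftrightarrow> arc V par D lam v u)
       \<longrightarrow> upwards_closed V par D
       \<longrightarrow> \<not> (\<exists>a. coat_hanger V r par D lam a)
       \<longrightarrow> card (leaves V par) \<ge> n\<^sub>0
       \<longrightarrow> real (wcol \<mu> V (gaifman_edge r par D))
             \<le> real (card (leaves V par)) powr (1 / real \<mu>)
       \<longrightarrow> (\<forall>w\<in>V. real (card (IN_set V par D lam w)) \<le> real (card (leaves V par)) powr (1 / real \<mu>)
                 \<or> real (card (OUT_set V par D lam w)) \<le> real (card (leaves V par)) powr (1 / real \<mu>))
       \<longrightarrow> real (wcol \<rho> (leaves V par) (arc V par D lam))
             \<le> real (card (leaves V par)) powr (1 / real \<rho>))"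
proof (rule exI[of _ "4 * \<rho>"], rule exI[of _ "4 ^ \<rho>"], intro conjI allI impI)
  show "1 \<le> 4 * \<rho>" using assms by simp
  fix V :: "nat set" and r par D lam
  assume QB: "quasi_bush V r par D"
    and SYM: "\<forall>u v. arc V par D lam u v \<longleftrightarrow> arc V par D lam v u"
    and UC: "upwards_closed V par D"
    and NC: "\<not> (\<exists>a. coat_hanger V r par D lam a)"
    and nL: "4 ^ \<rho> \<le> card (leaves V par)"
    and WC: "real (wcol (4 * \<rho>) V (gaifman_edge r par D))
             \<le> real (card (leaves V par)) powr (1 / real (4 * \<rho>))"
    and IO: "\<forall>w\<in>V. real (card (IN_set V par D lam w)) \<le> real (card (leaves V par)) powr (1 / real (4 * \<rho>))
                 \<or> real (card (OUT_set V par D lam w)) \<le> real (card (leaves V par)) powr (1 / real (4 * \<rho>))"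
  define L where "L = leaves V par"
  define s where "s = real (card L) powr (1 / real (4 * \<rho>))"
  define H where "H = gaifman_edge r par D"
  define A where "A = arc V par D lam"
  define cp where "cp = conn_point V par D"
  define S where "S w = (if real (card (IN_set V par D lam w)) \<le> s then IN_set V par D lam w
                          else OUT_set V par D lam w)" for w
  define c where "c = wcol (4 * \<rho>) V H"
  define sv where "sv = nat \<lfloor>s\<rfloor>"
  have T: "rooted_tree V r par" using QB by (simp add: quasi_bush_def)
  have finV: "finite V" using T by (simp add: rooted_tree_def)
  have LV: "L \<subseteq> V" unfolding L_def by (auto simp: leaves_def is_leaf_def)
  have S_sub: "S w \<subseteq> L" for w
    unfolding S_def L_def IN_set_def OUT_set_def arc_def by auto
  have finS: "finite (S w)" for w using S_sub LV finV by (meson finite_subset)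
  have Sbound: "card (S w) \<le> sv" if "w \<in> V" for w
  proof -
    have "real (card (S w)) \<le> s" using IO that unfolding S_def s_def L_def by auto
    then show ?thesis unfolding sv_def by (rule le_nat_floor)
  qed
  have ex: "\<exists>f :: nat \<Rightarrow> nat. inj_on f V \<and> (\<forall>v\<in>V. card (wreach (4 * \<rho>) V H f v) \<le> card V)"
    by (intro exI[of _ id] conjI ballI) (auto intro!: card_mono finV simp: wreach_def)
  have "\<exists>f :: nat \<Rightarrow> nat. inj_on f V \<and> (\<forall>v\<in>V. card (wreach (4 * \<rho>) V H f v) \<le> c)"
    unfolding c_def wcol_def by (rule LeastI_ex) (use ex in blast)
  then obtain f :: "nat \<Rightarrow> nat" where finj: "inj_on f V"
    and fW: "\<And>v. v \<in> V \<Longrightarrow> card (wreach (4 * \<rho>) V H f v) \<le> c" by blast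
  define key where "key x = Min (insert (f x) (f ` {w \<in> V. x \<in> S w}))" for x
  have finK: "finite (insert (f x) (f ` {w \<in> V. x \<in> S w}))" for x using finV by simp
  have key_le1: "key x \<le> f x" for x unfolding key_def using finK by simp
  have key_le2: "key x \<le> f w" if "w \<in> V" "x \<in> S w" for x w
    unfolding key_def using finK that by (intro Min_le) auto
  have key_att: "\<exists>w. f w = key x \<and> (w = x \<or> (w \<in> V \<and> x \<in> S w))" for x
  proof -
    have "key x \<in> insert (f x) (f ` {w \<in> V. x \<in> S w})" unfolding key_def
      using finK by (intro Min_in) auto
    then show ?thesis by auto
  qed
  define M where "M = Max (f ` V)"
  have fM: "f x \<le> M" if "x \<in> V" for x unfolding M_def using finV that by simp
  define key' where "key' x = key x * (M + 1) + f x" for x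
  have key'_mod: "key' x mod (M + 1) = f x" if "x \<in> V" for x
  proof -
    have "key' x mod (M + 1) = (f x + key x * (M + 1)) mod (M + 1)" unfolding key'_def by (simp add: add.commute)
    also have "\<dots> = f x mod (M + 1)" by (rule mod_mult_self1)
    also have "\<dots> = f x" using fM[OF that] by simp
    finally show ?thesis .
  qed
  have inj': "inj_on key' L"
  proof (rule inj_onI)
    fix a b assume "a \<in> L" "b \<in> L" "key' a = key' b"
    then have "f a = f b" using key'_mod LV by (metis subsetD)
    then show "a = b" using finj \<open>a \<in> L\<close> \<open>b \<in> L\<close> LV by (meson inj_onD subsetD)
  qed
  have key'_mono: "key a \<le> key b" if "b \<in> V" "key' a \<le> key' b" for a b
  proof (rule ccontr)
    assume "\<not> key a \<le> key b"
    then have "key b + 1 \<le> key a" by simp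
    then have "(key b + 1) * (M + 1) \<le> key a * (M + 1)" by (rule mult_right_mono) simp
    then have "key b * (M + 1) + M + 1 \<le> key a * (M + 1)" by (simp add: algebra_simps)
    moreover have "f b \<le> M" using fM that(1) .
    ultimately show False using that(2) unfolding key'_def by linarith
  qed
  have main: "wreach \<rho> L A key' v \<subseteq> (\<Union>w\<in>wreach (4 * \<rho>) V H f v. insert w (S w))" for v
  proof
    fix u assume "u \<in> wreach \<rho> L A key' v"
    then obtain q where uL: "u \<in> L" and q: "q \<noteq> []" "hd q = v" "last q = u" "length q \<le> \<rho> + 1"
      "set q \<subseteq> L" "\<forall>i. i + 1 < length q \<longrightarrow> A (q ! i) (q ! (i + 1))" "\<forall>x\<in>set q. key' u \<le> key' x"
      unfolding wreach_def by blast
    have qkey: "key u \<le> key x" if "x \<in> set q" for x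
      using key'_mono q(5,7) that LV by blast
    have sq: "successively A q" using q(6) by (simp add: successively_conv_nth)
    have step: "\<exists>w. H x w \<and> (w = y \<or> H w y) \<and> (key u \<le> f w \<and> w \<in> V)"
      if xq: "x \<in> set q" and yq: "y \<in> set q" and Axy: "A x y" for x y
    proof -
      define w where "w = cp x y"
      have ac: "(x, w) \<in> D" "w \<in> V" "w = y \<or> (y \<noteq> r \<and> w = par y)"
        using arc_cp[OF QB UC NC Axy[unfolded A_def]] unfolding w_def cp_def by auto
      have "x \<in> IN_set V par D lam w" using Axy unfolding IN_set_def A_def w_def cp_def by blast
      moreover have "y \<in> OUT_set V par D lam w" using Axy unfolding OUT_set_def A_def w_def cp_def by blast
      ultimately have "x \<in> S w \<or> y \<in> S w" unfolding S_def by auto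
      then have "key u \<le> f w" using key_le2[OF ac(2)] qkey xq yq by (meson order_trans)
      moreover have "H x w" using ac(1) unfolding H_def gaifman_edge_def by simp
      moreover have "w = y \<or> H w y" using ac(3) unfolding H_def gaifman_edge_def by auto
      ultimately show ?thesis using ac(2) by blast
    qed
    obtain p where p: "p \<noteq> []" "hd p = hd q" "last p = last q" "length p + 1 \<le> 2 * length q"
      "successively H p" "\<forall>z\<in>set p. z \<in> set q \<or> (key u \<le> f z \<and> z \<in> V)"
      using expand_walk[of A q H "\<lambda>z. key u \<le> f z \<and> z \<in> V", OF sq q(1) step] by blast
    obtain ws where ws: "f ws = key u" "ws = u \<or> (ws \<in> V \<and> u \<in> S ws)" using key_att by blast
    have wsV: "ws \<in> V" using ws(2) uL LV by auto
    define p' where "p' = (if ws = u then p else p @ [ws])"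
    have p'1: "p' \<noteq> []" "hd p' = v" "last p' = ws" "length p' \<le> 4 * \<rho> + 1"
      using p q assms unfolding p'_def by auto
    have p'2: "set p' \<subseteq> V" using p q(5) LV wsV unfolding p'_def by auto
    have Hu: "H u ws" if "ws \<noteq> u"
    proof -
      have uS: "u \<in> S ws" using ws(2) that by simp
      then have "u \<in> IN_set V par D lam ws \<or> u \<in> OUT_set V par D lam ws" unfolding S_def by (auto split: if_splits)
      then show ?thesis
      proof
        assume "u \<in> IN_set V par D lam ws"
        then obtain y where "arc V par D lam u y" "conn_point V par D u y = ws" unfolding IN_set_def by blast
        then have "(u, ws) \<in> D" using arc_cp[OF QB UC NC] by blast
        then show ?thesis unfolding H_def gaifman_edge_def by simp
      next
        assume "u \<in> OUT_set V par D lam ws"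
        then obtain x where "arc V par D lam x u" "conn_point V par D x u = ws" unfolding OUT_set_def by blast
        then have "ws = u \<or> (u \<noteq> r \<and> ws = par u)" using arc_cp[OF QB UC NC] by blast
        then show ?thesis using that unfolding H_def gaifman_edge_def by auto
      qed
    qed
    have p'3: "successively H p'"
      using p(1,3,5) q(3) Hu unfolding p'_def by (auto simp: successively_append_iff)
    have p'4: "\<forall>x\<in>set p'. f ws \<le> f x"
    proof
      fix x assume "x \<in> set p'"
      then have "x \<in> set p \<or> x = ws" unfolding p'_def by (auto split: if_splits)
      then show "f ws \<le> f x"
      proof
        assume "x \<in> set p"
        then have "x \<in> set q \<or> key u \<le> f x" using p(6) by blast
        then show ?thesis
        proof
          assume "x \<in> set q"
          then show ?thesis using ws(1) qkey[of x] key_le1[of x] by linarith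
        next
          assume "key u \<le> f x"
          then show ?thesis using ws(1) by simp
        qed
      qed simp
    qed
    have "ws \<in> wreach (4 * \<rho>) V H f v"
      unfolding wreach_def using wsV p'1 p'2 p'3 p'4
      by (intro CollectI conjI exI[of _ p']) (auto simp: successively_conv_nth)
    moreover have "u \<in> insert ws (S ws)" using ws(2) by auto
    ultimately show "u \<in> (\<Union>w\<in>wreach (4 * \<rho>) V H f v. insert w (S w))" by blast
  qed
  have cardb: "card (wreach \<rho> L A key' v) \<le> c * (sv + 1)" if "v \<in> L" for v
  proof -
    define W where "W = wreach (4 * \<rho>) V H f v"
    have WV: "W \<subseteq> V" unfolding W_def wreach_def by auto
    have finW: "finite W" using WV finV by (rule finite_subset)
    have "card (wreach \<rho> L A key' v) \<le> card (\<Union>w\<in>W. insert w (S w))"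
      using main[of v] finW finS unfolding W_def by (intro card_mono) auto
    also have "\<dots> \<le> (\<Sum>w\<in>W. card (insert w (S w)))" using finW by (rule card_UN_le)
    also have "\<dots> \<le> (\<Sum>w\<in>W. sv + 1)"
    proof (rule sum_mono)
      fix w assume "w \<in> W"
      then have "card (S w) \<le> sv" using Sbound WV by blast
      moreover have "card (insert w (S w)) \<le> card (S w) + 1" using finS by (simp add: card_insert_if)
      ultimately show "card (insert w (S w)) \<le> sv + 1" by simp
    qed
    also have "\<dots> = card W * (sv + 1)" by simp
    also have "\<dots> \<le> c * (sv + 1)" using fW[of v] that LV unfolding W_def by (intro mult_right_mono) auto
    finally show ?thesis .
  qed
  have wc: "wcol \<rho> L A \<le> c * (sv + 1)"
    unfolding wcol_def by (rule Least_le) (use inj' cardb in blast)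
  have sv_le: "real sv \<le> s"
  proof -
    have "s \<ge> 0" unfolding s_def by simp
    then show ?thesis unfolding sv_def by simp
  qed
  have "real (c * (sv + 1)) \<le> real (card L) powr (1 / real \<rho>)"
    using real_arith[OF assms nL[folded L_def], of c sv] WC sv_le
    unfolding c_def H_def s_def L_def by simp
  then show "real (wcol \<rho> (leaves V par) (arc V par D lam)) \<le> real (card (leaves V par)) powr (1 / real \<rho>)"
    using wc unfolding L_def A_def by (meson of_nat_le_iff order_trans)
qed

end
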